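(* (a) Let $(\mathbb{L},\Box,\Diamond)$ be an $\mathcal{L}$-algebra. If $i:\mathbb{L}\to\mathbf{A}$ is an $\mathbf{A}$-ideal, then so is $i^{-\Box}$. (b) If $i:\mathbf{Fm}\to\mathbf{A}$ is a proper $\mathbf{A}$-ideal of the Lindenbaum–Tarski algebra $\mathbf{Fm}$, then so is $i^{-\Box}$.
   Context: $\mathbf{A}=(D,1,0,\vee,\wedge,\otimes,\to)$ is a fixed complete lattice with top $1$ and bottom $0$, frame-distributive and dually frame-distributive, with a commutative associative $\otimes$ residuated by $\to$, and $1\to\alpha=\alpha$ for all $\alpha$. An $\mathcal{L}$-algebra $(\mathbb{L},\Box,\Diamond)$ is a bounded lattice with unary $\Box$ preserving finite meets ($\Box\top=\top$, $\Box(a\wedge b)=\Box a\wedge\Box b$) and unary $\Diamond$ preserving finite joins ($\Diamond\bot=\bot$, $\Diamond(a\vee b)=\Diamond a\vee\Diamond b$). An $\mathbf{A}$-ideal of $\mathbb{L}$ is $i:\mathbb{L}\to\mathbf{A}$ with $i(\bot)=1$ and $i(a\vee b)=i(a)\wedge i(b)$ for all $a,b$; it is proper if moreover $i(\top)=0$. For $k:\mathbb{L}\to\mathbf{A}$, $k^{-\Box}(a)=\bigvee\{k(b)\mid a\le\Box b\}$. $\mathcal{L}$: $\varphi::=\bot\mid\top\mid p\mid\varphi\wedge\varphi\mid\varphi\vee\varphi\mid\Box\varphi\mid\Diamond\varphi$ over a countable set of atoms. $\mathbf{L}$ is the least set of sequents containing $p\vdash p$, $\bot\vdash p$, $p\vdash\top$,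 $p\vdash p\vee q$, $q\vdash p\vee q$, $p\wedge q\vdash p$, $p\wedge q\vdash q$, $\top\vdash\Box\top$, $\Box p\wedge\Box q\vdash\Box(p\wedge q)$, $\Diamond\bot\vdash\bot$, $\Diamond(p\vee q)\vdash\Diamond p\vee\Diamond q$ and closed under cut, uniform substitution, from $\chi\vdash\phi,\chi\vdash\psi$ infer $\chi\vdash\phi\wedge\psi$, from $\phi\vdash\chi,\psi\vdash\chi$ infer $\phi\vee\psi\vdash\chi$, and from $\phi\vdash\psi$ infer $\Box\phi\vdash\Box\psi$ and $\Diamond\phi\vdash\Diamond\psi$. $\mathbf{Fm}$ is the Lindenbaum–Tarski algebra of $\mathcal{L}$-formulas modulo $\mathbf{L}$ (ordered by derivability), which is an $\mathcal{L}$-algebra. *)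

theory Defs
  imports Main
begin

definition A_algebra :: "('a::complete_lattice \<Rightarrow> 'a \<Rightarrow> 'a) \<Rightarrow> ('a \<Rightarrow> 'a \<Rightarrow> 'a) \<Rightarrow> bool" where
  "A_algebra tens imp \<longleftrightarrow>
     (\<forall>(a::'a) S. inf a (Sup S) = (SUP s\<in>S. inf a s)) \<and>
     (\<forall>(a::'a) S. sup a (Inf S) = (INF s\<in>S. sup a s)) \<and>
     (\<forall>a b. tens a b = tens b a) \<and>
     (\<forall>a b c. tens (tens a b) c = tens a (tens b c)) \<and>
     (\<forall>a b c. tens a b \<le> c \<longleftrightarrow> a \<le> imp b c) \<and>
     (\<forall>a. imp top a = a)"

definition L_algebra :: "('l::bounded_lattice \<Rightarrow> 'l) \<Rightarrow> ('l \<Rightarrow> 'l) \<Rightarrow> bool" where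
  "L_algebra box dia \<longleftrightarrow>
     box top = top \<and> (\<forall>a b. box (inf a b) = inf (box a) (box b)) \<and>
     dia bot = bot \<and> (\<forall>a b. dia (sup a b) = sup (dia a) (dia b))"

definition A_ideal :: "('l::bounded_lattice \<Rightarrow> 'a::complete_lattice) \<Rightarrow> bool" where
  "A_ideal i \<longleftrightarrow> i bot = top \<and> (\<forall>a b. i (sup a b) = inf (i a) (i b))"

definition proper_A_ideal :: "('l::bounded_lattice \<Rightarrow> 'a::complete_lattice) \<Rightarrow> bool" where
  "proper_A_ideal i \<longleftrightarrow> A_ideal i \<and> i top = bot"

definition inv_box :: "('l::order \<Rightarrow> 'l) \<Rightarrow> ('l \<Rightarrow> 'a::complete_lattice) \<Rightarrow> 'l \<Rightarrow> 'a" where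
  "inv_box box k a = Sup {k b | b. a \<le> box b}"

datatype form = FBot | FTop | Atom nat | FAnd form form | FOr form form
  | FBox form | FDia form

primrec subst :: "(nat \<Rightarrow> form) \<Rightarrow> form \<Rightarrow> form" where
  "subst s FBot = FBot"
| "subst s FTop = FTop"
| "subst s (Atom n) = s n"
| "subst s (FAnd a b) = FAnd (subst s a) (subst s b)"
| "subst s (FOr a b) = FOr (subst s a) (subst s b)"
| "subst s (FBox a) = FBox (subst s a)"
| "subst s (FDia a) = FDia (subst s a)"

abbreviation "p0 \<equiv> Atom 0"
abbreviation "q0 \<equiv> Atom 1"

inductive deriv :: "form \<Rightarrow> form \<Rightarrow> bool" where
  ax_id: "deriv p0 p0"
| ax_bot: "deriv FBot p0"
| ax_top: "deriv p0 FTop"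
| ax_or1: "deriv p0 (FOr p0 q0)"
| ax_or2: "deriv q0 (FOr p0 q0)"
| ax_and1: "deriv (FAnd p0 q0) p0"
| ax_and2: "deriv (FAnd p0 q0) q0"
| ax_boxtop: "deriv FTop (FBox FTop)"
| ax_boxand: "deriv (FAnd (FBox p0) (FBox q0)) (FBox (FAnd p0 q0))"
| ax_diabot: "deriv (FDia FBot) FBot"
| ax_diaor: "deriv (FDia (FOr p0 q0)) (FOr (FDia p0) (FDia q0))"
| cut: "deriv a c \<Longrightarrow> deriv c b \<Longrightarrow> deriv a b"
| substR: "deriv a b \<Longrightarrow> deriv (subst s a) (subst s b)"
| andI: "deriv c a \<Longrightarrow> deriv c b \<Longrightarrow> deriv c (FAnd a b)"
| orE: "deriv a c \<Longrightarrow> deriv b c \<Longrightarrow> deriv (FOr a b) c"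
| boxM: "deriv a b \<Longrightarrow> deriv (FBox a) (FBox b)"
| diaM: "deriv a b \<Longrightarrow> deriv (FDia a) (FDia b)"

definition sb2 :: "form \<Rightarrow> form \<Rightarrow> nat \<Rightarrow> form" where
  "sb2 a b n = (if n = 0 then a else b)"

lemma d_refl: "deriv a a"
  using substR[OF ax_id, of "sb2 a a"] by (simp add: sb2_def)
lemma d_bot: "deriv FBot a"
  using substR[OF ax_bot, of "sb2 a a"] by (simp add: sb2_def)
lemma d_top: "deriv a FTop"
  using substR[OF ax_top, of "sb2 a a"] by (simp add: sb2_def)
lemma d_or1: "deriv a (FOr a b)"
  using substR[OF ax_or1, of "sb2 a b"] by (simp add: sb2_def)
lemma d_or2: "deriv b (FOr a b)"
  using substR[OF ax_or2, of "sb2 a b"] by (simp add: sb2_def)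
lemma d_and1: "deriv (FAnd a b) a"
  using substR[OF ax_and1, of "sb2 a b"] by (simp add: sb2_def)
lemma d_and2: "deriv (FAnd a b) b"
  using substR[OF ax_and2, of "sb2 a b"] by (simp add: sb2_def)

definition eqv :: "form \<Rightarrow> form \<Rightarrow> bool" where
  "eqv a b \<longleftrightarrow> deriv a b \<and> deriv b a"

lemma equivp_eqv: "equivp eqv"
  unfolding eqv_def by (rule equivpI) (auto simp: reflp_def symp_def transp_def intro: d_refl cut)

quotient_type fm = form / eqv
  by (rule equivp_eqv)

instantiation fm :: bounded_lattice
begin

lift_definition less_eq_fm :: "fm \<Rightarrow> fm \<Rightarrow> bool" is deriv
  unfolding eqv_def by (blast intro: cut)

definition less_fm :: "fm \<Rightarrow> fm \<Rightarrow> bool" where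
  "less_fm a b \<longleftrightarrow> a \<le> b \<and> \<not> b \<le> a"

lift_definition inf_fm :: "fm \<Rightarrow> fm \<Rightarrow> fm" is FAnd
  unfolding eqv_def by (blast intro: cut andI d_and1 d_and2)

lift_definition sup_fm :: "fm \<Rightarrow> fm \<Rightarrow> fm" is FOr
  unfolding eqv_def by (blast intro: cut orE d_or1 d_or2)

lift_definition bot_fm :: fm is FBot .
lift_definition top_fm :: fm is FTop .

instance
proof
  fix x y z :: fm
  show "(x < y) = (x \<le> y \<and> \<not> y \<le> x)" by (simp add: less_fm_def)
  show "x \<le> x" by transfer (rule d_refl)
  show "x \<le> y \<Longrightarrow> y \<le> z \<Longrightarrow> x \<le> z" by transfer (rule cut)
  show "x \<le> y \<Longrightarrow> y \<le> x \<Longrightarrow> x = y" by transfer (simp add: eqv_def)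
  show "inf x y \<le> x" by transfer (rule d_and1)
  show "inf x y \<le> y" by transfer (rule d_and2)
  show "x \<le> y \<Longrightarrow> x \<le> z \<Longrightarrow> x \<le> inf y z" by transfer (rule andI)
  show "x \<le> sup x y" by transfer (rule d_or1)
  show "y \<le> sup x y" by transfer (rule d_or2)
  show "y \<le> x \<Longrightarrow> z \<le> x \<Longrightarrow> sup y z \<le> x" by transfer (rule orE)
  show "bot \<le> x" by transfer (rule d_bot)
  show "x \<le> top" by transfer (rule d_top)
qed

end

lift_definition box_fm :: "fm \<Rightarrow> fm" is FBox
  unfolding eqv_def by (blast intro: boxM)

lift_definition dia_fm :: "fm \<Rightarrow> fm" is FDia
  unfolding eqv_def by (blast intro: diaM)

end

theory Submission
  imports Defs
begin

lemma partA:
  fixes tens imp :: "'a::complete_lattice \<Rightarrow> 'a \<Rightarrow> 'a"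
    and box dia :: "'l::bounded_lattice \<Rightarrow> 'l" and i :: "'l \<Rightarrow> 'a"
  assumes A: "A_algebra tens imp" and L: "L_algebra box dia" and I: "A_ideal i"
  shows "A_ideal (inv_box box i)"
proof -
  have dist: "\<And>(a::'a) S. inf a (Sup S) = (SUP s\<in>S. inf a s)" using A by (simp add: A_algebra_def)
  have bmono: "\<And>x y. x \<le> y \<Longrightarrow> box x \<le> box y"
    using L unfolding L_algebra_def by (metis inf.absorb_iff1 inf.orderI)
  have ib: "i bot = top" and isup: "\<And>a b. i (sup a b) = inf (i a) (i b)" using I by (auto simp: A_ideal_def)
  have anti: "\<And>x y. x \<le> y \<Longrightarrow> inv_box box i y \<le> inv_box box i x"
    unfolding inv_box_def by (rule Sup_subset_mono) auto
  have "inv_box box i bot = top"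
    unfolding inv_box_def by (rule top_le, rule Sup_upper) (auto simp: ib[symmetric])
  moreover have "inv_box box i (sup a c) = inf (inv_box box i a) (inv_box box i c)" for a c
  proof (rule antisym)
    show "inv_box box i (sup a c) \<le> inf (inv_box box i a) (inv_box box i c)"
      by (simp add: anti)
    define S1 where "S1 = {i b | b. a \<le> box b}"
    define S2 where "S2 = {i b | b. c \<le> box b}"
    have "inf (Sup S1) (Sup S2) = (SUP s\<in>S2. inf (Sup S1) s)" by (rule dist)
    also have "\<dots> \<le> inv_box box i (sup a c)"
    proof (rule SUP_least)
      fix s assume s: "s \<in> S2"
      have "inf (Sup S1) s = inf s (Sup S1)" by (rule inf.commute)
      also have "\<dots> = (SUP t\<in>S1. inf s t)" by (rule dist)
      also have "\<dots> \<le> inv_box box i (sup a c)"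
      proof (rule SUP_least)
        fix t assume t: "t \<in> S1"
        obtain b1 where b1: "t = i b1" "a \<le> box b1" using t S1_def by auto
        obtain b2 where b2: "s = i b2" "c \<le> box b2" using s S2_def by auto
        have "sup a c \<le> box (sup b1 b2)"
          using b1(2) b2(2) bmono[of b1 "sup b1 b2"] bmono[of b2 "sup b1 b2"] by (meson le_sup_iff order_trans sup_ge1 sup_ge2)
        hence "i (sup b1 b2) \<le> inv_box box i (sup a c)" unfolding inv_box_def by (intro Sup_upper) auto
        thus "inf s t \<le> inv_box box i (sup a c)" using b1 b2 isup by (simp add: inf_commute)
      qed
      finally show "inf (Sup S1) s \<le> inv_box box i (sup a c)" .
    qed
    finally show "inf (inv_box box i a) (inv_box box i c) \<le> inv_box box i (sup a c)"
      unfolding inv_box_def S1_def S2_def .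
  qed
  ultimately show ?thesis by (simp add: A_ideal_def)
qed

lemma d_boxand: "deriv (FAnd (FBox a) (FBox b)) (FBox (FAnd a b))"
  using substR[OF ax_boxand, of "sb2 a b"] by (simp add: sb2_def)
lemma d_diaor: "deriv (FDia (FOr a b)) (FOr (FDia a) (FDia b))"
  using substR[OF ax_diaor, of "sb2 a b"] by (simp add: sb2_def)
lemma d_diabot: "deriv (FDia FBot) FBot"
  using substR[OF ax_diabot, of "sb2 FBot FBot"] by (simp add: sb2_def)

lemma box_mono: "x \<le> y \<Longrightarrow> box_fm x \<le> box_fm y" by transfer (rule boxM)
lemma dia_mono: "x \<le> y \<Longrightarrow> dia_fm x \<le> dia_fm y" by transfer (rule diaM)
lemma box_inf_le: "inf (box_fm x) (box_fm y) \<le> box_fm (inf x y)" by transfer (rule d_boxand)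
lemma dia_sup_le: "dia_fm (sup x y) \<le> sup (dia_fm x) (dia_fm y)" by transfer (rule d_diaor)
lemma dia_bot_le: "dia_fm bot \<le> bot" by transfer (rule d_diabot)
lemma box_top_ge: "top \<le> box_fm top" by transfer (rule ax_boxtop)

lemma L_fm: "L_algebra box_fm dia_fm"
  unfolding L_algebra_def
  by (auto intro!: antisym box_top_ge box_inf_le dia_bot_le dia_sup_le box_mono dia_mono)

definition ole :: "fm option \<Rightarrow> fm option \<Rightarrow> bool" where
  "ole x y = (case y of None \<Rightarrow> True | Some b \<Rightarrow> (case x of None \<Rightarrow> False | Some a \<Rightarrow> a \<le> b))"
definition omt :: "fm option \<Rightarrow> fm option \<Rightarrow> fm option" where
  "omt x y = (case x of None \<Rightarrow> y | Some a \<Rightarrow> (case y of None \<Rightarrow> Some a | Some b \<Rightarrow> Some (inf a b)))"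
definition ojn :: "fm option \<Rightarrow> fm option \<Rightarrow> fm option" where
  "ojn x y = (case x of None \<Rightarrow> None | Some a \<Rightarrow> (case y of None \<Rightarrow> None | Some b \<Rightarrow> Some (sup a b)))"
definition obx :: "fm option \<Rightarrow> fm option" where
  "obx x = (case x of None \<Rightarrow> None | Some a \<Rightarrow> Some (box_fm a))"
definition odx :: "fm option \<Rightarrow> fm option" where
  "odx x = (case x of None \<Rightarrow> Some (dia_fm top) | Some a \<Rightarrow> Some (dia_fm a))"

lemma ole_trans: "ole x y \<Longrightarrow> ole y z \<Longrightarrow> ole x z"
  by (cases x; cases y; cases z) (auto simp: ole_def)

primrec ev :: "(nat \<Rightarrow> fm option) \<Rightarrow> form \<Rightarrow> fm option" where
  "ev v FBot = Some bot"
| "ev v FTop = None"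
| "ev v (Atom n) = v n"
| "ev v (FAnd a b) = omt (ev v a) (ev v b)"
| "ev v (FOr a b) = ojn (ev v a) (ev v b)"
| "ev v (FBox a) = obx (ev v a)"
| "ev v (FDia a) = odx (ev v a)"

lemma ev_subst: "ev v (subst s a) = ev (\<lambda>n. ev v (s n)) a"
  by (induction a) auto

lemma sound: "deriv a b \<Longrightarrow> ole (ev v a) (ev v b)"
proof (induction arbitrary: v rule: deriv.induct)
  case ax_id then show ?case by (cases "v 0") (auto simp: ole_def)
next
  case ax_bot then show ?case by (cases "v 0") (auto simp: ole_def)
next
  case ax_top then show ?case by (cases "v 0") (auto simp: ole_def)
next
  case ax_or1 then show ?case by (cases "v 0"; cases "v 1") (auto simp: ole_def ojn_def)
next
  case ax_or2 then show ?case by (cases "v 0"; cases "v 1") (auto simp: ole_def ojn_def)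
next
  case ax_and1 then show ?case by (cases "v 0"; cases "v 1") (auto simp: ole_def omt_def)
next
  case ax_and2 then show ?case by (cases "v 0"; cases "v 1") (auto simp: ole_def omt_def)
next
  case ax_boxtop then show ?case by (auto simp: ole_def obx_def)
next
  case ax_boxand then show ?case
    by (cases "v 0"; cases "v 1") (auto simp: ole_def omt_def obx_def box_inf_le)
next
  case ax_diabot then show ?case by (auto simp: ole_def odx_def dia_bot_le)
next
  case ax_diaor then show ?case
    by (cases "v 0"; cases "v 1") (simp_all add: ole_def ojn_def odx_def dia_sup_le le_supI2)
next
  case (cut a c b) then show ?case using ole_trans by blast
next
  case (substR a b s) then show ?case by (simp add: ev_subst)
next
  case (andI c a b)
  then have "ole (ev v c) (ev v a)" "ole (ev v c) (ev v b)" by blast+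
  then show ?case by (cases "ev v a"; cases "ev v b"; cases "ev v c") (auto simp: ole_def omt_def)
next
  case (orE a c b)
  then have "ole (ev v a) (ev v c)" "ole (ev v b) (ev v c)" by blast+
  then show ?case by (cases "ev v a"; cases "ev v b"; cases "ev v c") (auto simp: ole_def ojn_def)
next
  case (boxM a b)
  then have "ole (ev v a) (ev v b)" by blast
  then show ?case by (cases "ev v a"; cases "ev v b") (auto simp: ole_def obx_def box_mono)
next
  case (diaM a b)
  then have "ole (ev v a) (ev v b)" by blast
  then show ?case by (cases "ev v a"; cases "ev v b") (auto simp: ole_def odx_def dia_mono)
qed

definition pr :: "fm option \<Rightarrow> fm" where "pr x = (case x of None \<Rightarrow> top | Some a \<Rightarrow> a)"

lemma ev_pr: "pr (ev (\<lambda>n. Some (abs_fm (Atom n))) a) = abs_fm a"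
proof (induction a)
  case FBot then show ?case by (simp add: pr_def bot_fm.abs_eq)
next
  case FTop then show ?case by (simp add: pr_def top_fm.abs_eq)
next
  case (Atom x) then show ?case by (simp add: pr_def)
next
  case (FAnd a1 a2) then show ?case
    by (auto simp: pr_def omt_def inf_fm.abs_eq[symmetric] split: option.splits)
next
  case (FOr a1 a2) then show ?case
    by (auto simp: pr_def ojn_def sup_fm.abs_eq[symmetric] split: option.splits)
next
  case (FBox a) then show ?case
    by (auto simp: pr_def obx_def box_fm.abs_eq[symmetric] intro: antisym box_top_ge split: option.splits)
next
  case (FDia a) then show ?case
    by (auto simp: pr_def odx_def dia_fm.abs_eq[symmetric] split: option.splits)
qed

lemma box_reflect: assumes "top \<le> box_fm b" shows "b = top"
proof -
  obtain r where b: "b = abs_fm r" by (metis Quotient_fm Quotient_abs_rep)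
  have "deriv FTop (FBox r)" using assms unfolding b
    by (metis box_fm.abs_eq eqv_def less_eq_fm.abs_eq top_fm.abs_eq equivp_eqv equivp_reflp)
  from sound[OF this, of "\<lambda>n. Some (abs_fm (Atom n))"]
  have "ev (\<lambda>n. Some (abs_fm (Atom n))) r = None"
    by (auto simp: ole_def obx_def split: option.splits)
  with ev_pr[of r] show ?thesis by (simp add: b pr_def)
qed

theorem mainTheorem6:
  fixes tens imp :: "'a::complete_lattice \<Rightarrow> 'a \<Rightarrow> 'a"
  assumes "A_algebra tens imp"
  shows "(\<forall>(box :: 'l::bounded_lattice \<Rightarrow> 'l) dia (i :: 'l \<Rightarrow> 'a).
            L_algebra box dia \<and> A_ideal i \<longrightarrow> A_ideal (inv_box box i))
       \<and> (\<forall>i :: fm \<Rightarrow> 'a. proper_A_ideal i \<longrightarrow> proper_A_ideal (inv_box box_fm i))"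
proof (intro conjI allI impI)
  fix box :: "'l::bounded_lattice \<Rightarrow> 'l" and dia i
  assume "L_algebra box dia \<and> A_ideal (i :: 'l \<Rightarrow> 'a)"
  then show "A_ideal (inv_box box i)" using partA[OF assms] by blast
next
  fix i :: "fm \<Rightarrow> 'a"
  assume p: "proper_A_ideal i"
  have "A_ideal (inv_box box_fm i)" using partA[OF assms L_fm] p by (simp add: proper_A_ideal_def)
  moreover have "{i b | b. top \<le> box_fm b} = {i top}"
    using box_reflect box_top_ge by auto
  ultimately show "proper_A_ideal (inv_box box_fm i)"
    using p by (simp add: proper_A_ideal_def inv_box_def)
qed

end
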